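(* Let $H$ be a connected graph with $k=|V(H)|>1$ vertices that does not contain two false twins. Then no deterministic online algorithm (without advice) solving the Delayed Connected $H$-Node-Deletion Problem has competitive ratio smaller than $k$.
   Context: All graphs are finite, simple and undirected. Two distinct vertices are false twins if they have the same open neighborhood (in particular they are non-adjacent). An induced copy of $H$ in $G$ is an induced subgraph isomorphic to $H$; $G$ is $H$-free if it has none. An online graph $G$ has vertices $v_1,\dots,v_n$ revealed one at a time (with edges to earlier vertices); $G_t=G[\{v_1,\dots,v_t\}]$. Delayed Connected $H$-Node-Deletion Problem (for a fixed connected $H$): an online algorithm must choose sets $S_1\subseteq\dots\subseteq S_n$ with $S_t\subseteq V(G_t)$ and $G_t-S_t$ $H$-free for each $t$, where $S_t$ depends only on $G_t$; the cost is $|S_n|$. $\mathrm{OPT}(G)$ is the minimum size of $S\subseteq V(G)$ with $G-S$ $H$-free. An algorithm is $c$-competitive if there is a constant $\alpha\ge0$ with cost $\le c\cdot \mathrm{OPT}(G)+\alpha$ for every online graph $G$; its competitive ratio is the infimum of such $c\ge1$. *)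

theory Defs
  imports Main "HOL-Library.Extended_Real"
begin

definition simple_graph_on :: "'a set \<Rightarrow> ('a \<Rightarrow> 'a \<Rightarrow> bool) \<Rightarrow> bool" where
  "simple_graph_on V E \<longleftrightarrow> finite V \<and> (\<forall>x\<in>V. \<not> E x x) \<and> (\<forall>x\<in>V. \<forall>y\<in>V. E x y \<longrightarrow> E y x)"

definition connected_graph :: "'a set \<Rightarrow> ('a \<Rightarrow> 'a \<Rightarrow> bool) \<Rightarrow> bool" where
  "connected_graph V E \<longleftrightarrow> V \<noteq> {} \<and>
     (\<forall>u\<in>V. \<forall>v\<in>V. (\<lambda>x y. x \<in> V \<and> y \<in> V \<and> E x y)\<^sup>*\<^sup>* u v)"

definition false_twins :: "'a set \<Rightarrow> ('a \<Rightarrow> 'a \<Rightarrow> bool) \<Rightarrow> 'a \<Rightarrow> 'a \<Rightarrow> bool" where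
  "false_twins V E u v \<longleftrightarrow> u \<in> V \<and> v \<in> V \<and> u \<noteq> v \<and>
     {w \<in> V. E u w} = {w \<in> V. E v w}"

definition has_induced_copy ::
  "'h set \<Rightarrow> ('h \<Rightarrow> 'h \<Rightarrow> bool) \<Rightarrow> 'a set \<Rightarrow> ('a \<Rightarrow> 'a \<Rightarrow> bool) \<Rightarrow> bool" where
  "has_induced_copy VH EH V E \<longleftrightarrow>
     (\<exists>f. inj_on f VH \<and> f ` VH \<subseteq> V \<and> (\<forall>x\<in>VH. \<forall>y\<in>VH. EH x y \<longleftrightarrow> E (f x) (f y)))"

definition H_free ::
  "'h set \<Rightarrow> ('h \<Rightarrow> 'h \<Rightarrow> bool) \<Rightarrow> 'a set \<Rightarrow> ('a \<Rightarrow> 'a \<Rightarrow> bool) \<Rightarrow> bool" where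
  "H_free VH EH V E \<longleftrightarrow> \<not> has_induced_copy VH EH V E"

text \<open>Online graphs: the vertices are v_1,...,v_n, represented by 0,...,n-1 (revealed in this
  order); the edges are given by a symmetric irreflexive relation E on nat (only its restriction
  to {..<n} matters). G_t is the induced subgraph on {..<t}.\<close>

definition sym_irrefl :: "(nat \<Rightarrow> nat \<Rightarrow> bool) \<Rightarrow> bool" where
  "sym_irrefl E \<longleftrightarrow> (\<forall>x. \<not> E x x) \<and> (\<forall>x y. E x y \<longrightarrow> E y x)"

text \<open>A deterministic online algorithm: A t E is the set S_t chosen after the t-th vertex
  is revealed, for the online graph E.\<close>
definition valid_online_alg ::
  "'h set \<Rightarrow> ('h \<Rightarrow> 'h \<Rightarrow> bool) \<Rightarrow> (nat \<Rightarrow> (nat \<Rightarrow> nat \<Rightarrow> bool) \<Rightarrow> nat set) \<Rightarrow> bool" where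
  "valid_online_alg VH EH A \<longleftrightarrow>
     (\<forall>t E E'. (\<forall>i<t. \<forall>j<t. E i j = E' i j) \<longrightarrow> A t E = A t E') \<and>
     (\<forall>t E. sym_irrefl E \<longrightarrow>
        A t E \<subseteq> {..<t} \<and> A t E \<subseteq> A (Suc t) E \<and> H_free VH EH ({..<t} - A t E) E)"

definition OPT :: "'h set \<Rightarrow> ('h \<Rightarrow> 'h \<Rightarrow> bool) \<Rightarrow> nat \<Rightarrow> (nat \<Rightarrow> nat \<Rightarrow> bool) \<Rightarrow> nat" where
  "OPT VH EH n E = (LEAST m. \<exists>S. S \<subseteq> {..<n} \<and> card S = m \<and> H_free VH EH ({..<n} - S) E)"

definition competitive ::
  "'h set \<Rightarrow> ('h \<Rightarrow> 'h \<Rightarrow> bool) \<Rightarrow> (nat \<Rightarrow> (nat \<Rightarrow> nat \<Rightarrow> bool) \<Rightarrow> nat set) \<Rightarrow> real \<Rightarrow> bool" where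
  "competitive VH EH A c \<longleftrightarrow>
     (\<exists>\<alpha>::real. \<alpha> \<ge> 0 \<and> (\<forall>n E. sym_irrefl E \<longrightarrow>
        real (card (A n E)) \<le> c * real (OPT VH EH n E) + \<alpha>))"

text \<open>Competitive ratio: infimum of all c \<ge> 1 for which A is c-competitive (\<infinity> if none).\<close>
definition competitive_ratio ::
  "'h set \<Rightarrow> ('h \<Rightarrow> 'h \<Rightarrow> bool) \<Rightarrow> (nat \<Rightarrow> (nat \<Rightarrow> nat \<Rightarrow> bool) \<Rightarrow> nat set) \<Rightarrow> ereal" where
  "competitive_ratio VH EH A = (INF c \<in> {c. c \<ge> 1 \<and> competitive VH EH A c}. ereal c)"

end

theory Submission
  imports Defs
begin

definition Eg :: "('h \<Rightarrow> 'h \<Rightarrow> bool) \<Rightarrow> (nat \<Rightarrow> 'h) \<Rightarrow> nat \<Rightarrow> nat \<Rightarrow> bool" where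
  "Eg EH g i j = EH (g i) (g j)"

definition nxt :: "'h set \<Rightarrow> ('h \<Rightarrow> 'h \<Rightarrow> bool) \<Rightarrow> (nat \<Rightarrow> (nat \<Rightarrow> nat \<Rightarrow> bool) \<Rightarrow> nat set)
   \<Rightarrow> nat \<Rightarrow> (nat \<Rightarrow> 'h) \<Rightarrow> 'h" where
  "nxt VH EH A t g = (SOME h. h \<in> VH \<and> (\<forall>i<t. i \<notin> A t (Eg EH g) \<longrightarrow> g i \<noteq> h))"

fun FF :: "'h set \<Rightarrow> ('h \<Rightarrow> 'h \<Rightarrow> bool) \<Rightarrow> (nat \<Rightarrow> (nat \<Rightarrow> nat \<Rightarrow> bool) \<Rightarrow> nat set)
   \<Rightarrow> 'h \<Rightarrow> nat \<Rightarrow> nat \<Rightarrow> 'h" where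
  "FF VH EH A h0 0 = (\<lambda>_. h0)"
| "FF VH EH A h0 (Suc t) = (FF VH EH A h0 t)(t := nxt VH EH A t (FF VH EH A h0 t))"

lemma FF_stable: "i < t \<Longrightarrow> FF VH EH A h0 t i = FF VH EH A h0 (Suc i) i"
proof (induction t)
  case 0 then show ?case by simp
next
  case (Suc t)
  show ?case
  proof (cases "i = t")
    case True then show ?thesis by simp
  next
    case False
    then have "i < t" using Suc.prems by simp
    then show ?thesis using Suc.IH False by simp
  qed
qed

lemma sym_irrefl_Eg:
  assumes "simple_graph_on VH EH" "\<forall>i. g i \<in> VH"
  shows "sym_irrefl (Eg EH g)"
  using assms unfolding simple_graph_on_def sym_irrefl_def Eg_def by blast

lemma nxt_prop:
  assumes sg: "simple_graph_on VH EH" and va: "valid_online_alg VH EH A"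
    and g: "\<forall>i. g i \<in> VH"
  shows "nxt VH EH A t g \<in> VH \<and> (\<forall>i<t. i \<notin> A t (Eg EH g) \<longrightarrow> g i \<noteq> nxt VH EH A t g)"
proof -
  have si: "sym_irrefl (Eg EH g)" using sym_irrefl_Eg[OF sg g] .
  have hf: "H_free VH EH ({..<t} - A t (Eg EH g)) (Eg EH g)"
    using va si unfolding valid_online_alg_def by blast
  have "\<exists>h. h \<in> VH \<and> (\<forall>i<t. i \<notin> A t (Eg EH g) \<longrightarrow> g i \<noteq> h)"
  proof (rule ccontr)
    assume "\<not> ?thesis"
    then have all: "\<forall>h\<in>VH. \<exists>i. i < t \<and> i \<notin> A t (Eg EH g) \<and> g i = h" by blast
    define f where "f h = (SOME i. i < t \<and> i \<notin> A t (Eg EH g) \<and> g i = h)" for h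
    have fp: "f h < t \<and> f h \<notin> A t (Eg EH g) \<and> g (f h) = h" if "h \<in> VH" for h
      unfolding f_def using someI_ex[OF all[rule_format, OF that]] .
    have "inj_on f VH" by (metis fp inj_onI)
    moreover have "f ` VH \<subseteq> {..<t} - A t (Eg EH g)" using fp by auto
    moreover have "\<forall>x\<in>VH. \<forall>y\<in>VH. EH x y \<longleftrightarrow> Eg EH g (f x) (f y)"
      using fp by (simp add: Eg_def)
    ultimately have "has_induced_copy VH EH ({..<t} - A t (Eg EH g)) (Eg EH g)"
      unfolding has_induced_copy_def by blast
    then show False using hf unfolding H_free_def by blast
  qed
  then show ?thesis unfolding nxt_def by (rule someI_ex)
qed

lemma FF_in:
  assumes sg: "simple_graph_on VH EH" and va: "valid_online_alg VH EH A" and h0: "h0 \<in> VH"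
  shows "\<forall>i. FF VH EH A h0 t i \<in> VH"
proof (induction t)
  case 0 then show ?case using h0 by simp
next
  case (Suc t)
  then show ?case using nxt_prop[OF sg va Suc] by simp
qed

theorem mainTheorem4:
  fixes VH :: "'h set" and EH :: "'h \<Rightarrow> 'h \<Rightarrow> bool"
    and A :: "nat \<Rightarrow> (nat \<Rightarrow> nat \<Rightarrow> bool) \<Rightarrow> nat set"
  assumes "simple_graph_on VH EH"
    and "connected_graph VH EH"
    and "card VH > 1"
    and "\<forall>u v. \<not> false_twins VH EH u v"
    and "valid_online_alg VH EH A"
  shows "competitive_ratio VH EH A \<ge> ereal (real (card VH))"
proof -
  note sg = assms(1) and va = assms(5) and nft = assms(4)
  have finVH: "finite VH" using sg unfolding simple_graph_on_def by blast
  define k where "k = card VH"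
  have k1: "k > 1" using assms(3) k_def by simp
  obtain h0 where h0: "h0 \<in> VH" using k1 k_def by (metis card.empty ex_in_conv not_less_zero)
  define F where "F = FF VH EH A h0"
  define cls where "cls i = F (Suc i) i" for i
  define E where "E = Eg EH cls"
  have Fin: "\<forall>i. F t i \<in> VH" for t unfolding F_def using FF_in[OF sg va h0] .
  have clsin: "cls i \<in> VH" for i using Fin unfolding cls_def by blast
  have Esi: "sym_irrefl E" unfolding E_def using sym_irrefl_Eg[OF sg] clsin by blast
  have Fcls: "i < t \<Longrightarrow> F t i = cls i" for i t unfolding F_def cls_def using FF_stable by metis
  have AF: "A t (Eg EH (F t)) = A t E" for t
  proof -
    have "\<forall>i<t. \<forall>j<t. Eg EH (F t) i j = E i j" using Fcls by (simp add: Eg_def E_def)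
    then show ?thesis using va unfolding valid_online_alg_def by blast
  qed
  have clst: "cls t = nxt VH EH A t (F t)" for t unfolding cls_def F_def by simp
  have new: "\<forall>i<t. i \<notin> A t E \<longrightarrow> cls i \<noteq> cls t" for t
    using nxt_prop[OF sg va Fin, of t] AF[of t] clst[of t] Fcls by metis
  define U where "U t = {..<t} - A t E" for t
  have Asub: "A t E \<subseteq> {..<t}" "A t E \<subseteq> A (Suc t) E" for t
    using va Esi unfolding valid_online_alg_def by blast+
  have injU: "inj_on cls (U t)" for t
  proof (induction t)
    case 0 then show ?case by (simp add: U_def)
  next
    case (Suc t)
    have sub: "U (Suc t) \<subseteq> insert t (U t)" using Asub(2)[of t] unfolding U_def by auto
    have "cls t \<notin> cls ` (U t - {t})" using new[of t] unfolding U_def by auto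
    then have "inj_on cls (insert t (U t))" using Suc.IH by (simp add: U_def)
    then show ?case using sub inj_on_subset by blast
  qed
  have cardU: "card (U t) \<le> k" for t
  proof -
    have "card (U t) = card (cls ` U t)" using injU card_image by metis
    also have "\<dots> \<le> k" unfolding k_def using finVH clsin by (intro card_mono) auto
    finally show ?thesis .
  qed
  have cost: "real t \<le> real (card (A t E)) + real k" for t
  proof -
    have "card (U t) = t - card (A t E)" unfolding U_def using Asub(1)[of t]
      by (simp add: card_Diff_subset finite_subset)
    then show ?thesis using cardU[of t] by linarith
  qed
  define C where "C n h = {i. i < n \<and> cls i = h}" for n h
  have opt: "real k * real (OPT VH EH n E) \<le> real n" for n
  proof -
    obtain h where h: "h \<in> VH" and hmin: "\<forall>h'. h' \<in> VH \<longrightarrow> card (C n h) \<le> card (C n h')"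
      using ex_has_least_nat[of "\<lambda>h. h \<in> VH" h0 "\<lambda>h. card (C n h)"] h0 by blast
    have un: "{..<n} = (\<Union>h'\<in>VH. C n h')" using clsin unfolding C_def by auto
    have "n = card (\<Union>h'\<in>VH. C n h')" using un by (metis card_lessThan)
    also have "\<dots> = (\<Sum>h'\<in>VH. card (C n h'))"
      by (rule card_UN_disjoint) (use finVH in \<open>auto simp: C_def\<close>)
    finally have nsum: "n = (\<Sum>h'\<in>VH. card (C n h'))" .
    have "k * card (C n h) \<le> (\<Sum>h'\<in>VH. card (C n h'))" unfolding k_def
      using sum_bounded_below[of VH "card (C n h)" "\<lambda>h'. card (C n h')"] hmin by auto
    then have "k * card (C n h) \<le> n" using nsum by simp
    moreover have "OPT VH EH n E \<le> card (C n h)"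
    proof -
      have hf: "H_free VH EH ({..<n} - C n h) E"
        unfolding H_free_def
      proof
        assume "has_induced_copy VH EH ({..<n} - C n h) E"
        then obtain f where fi: "inj_on f VH" and fs: "f ` VH \<subseteq> {..<n} - C n h"
          and fe: "\<forall>x\<in>VH. \<forall>y\<in>VH. EH x y \<longleftrightarrow> E (f x) (f y)"
          unfolding has_induced_copy_def by blast
        have img: "(cls \<circ> f) ` VH \<subseteq> VH - {h}" using fs clsin unfolding C_def by auto
        have "\<not> inj_on (cls \<circ> f) VH"
        proof
          assume "inj_on (cls \<circ> f) VH"
          then have "card VH \<le> card (VH - {h})"
            using card_inj_on_le[OF _ img] finVH by blast
          then show False using h finVH k1 k_def
            by (metis card_Diff1_less leD)
        qed
        then obtain x y where xy: "x \<in> VH" "y \<in> VH" "x \<noteq> y" "cls (f x) = cls (f y)"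
          unfolding inj_on_def by auto
        have "{w \<in> VH. EH x w} = {w \<in> VH. EH y w}"
          using fe xy by (auto simp: E_def Eg_def)
        then have "false_twins VH EH x y" using xy unfolding false_twins_def by blast
        then show False using nft by blast
      qed
      have "C n h \<subseteq> {..<n}" unfolding C_def by auto
      then show ?thesis unfolding OPT_def using hf by (intro Least_le) blast
    qed
    ultimately have "k * OPT VH EH n E \<le> n"
      by (meson le_trans mult_le_mono2)
    then show ?thesis by (metis of_nat_le_iff of_nat_mult)
  qed
  have cbound: "c \<ge> real k" if c1: "c \<ge> 1" and c2: "competitive VH EH A c" for c
  proof (rule ccontr)
    assume ck: "\<not> c \<ge> real k"
    obtain \<alpha> where al: "\<alpha> \<ge> 0" and b: "\<forall>n. real (card (A n E)) \<le> c * real (OPT VH EH n E) + \<alpha>"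
      using c2 Esi unfolding competitive_def by blast
    have kpos: "real k > 0" using k1 by simp
    have main: "real n * (real k - c) \<le> real k * (\<alpha> + real k)" for n
    proof -
      have "real n \<le> c * real (OPT VH EH n E) + \<alpha> + real k" using cost[of n] b by smt
      then have "real k * real n \<le> c * (real k * real (OPT VH EH n E)) + real k * (\<alpha> + real k)"
        using kpos by (smt (verit) mult_left_mono distrib_left mult.left_commute)
      also have "\<dots> \<le> c * real n + real k * (\<alpha> + real k)"
        using opt[of n] c1 by (smt (verit) mult_left_mono)
      finally show ?thesis by (simp add: algebra_simps)
    qed
    obtain n :: nat where n: "real n > real k * (\<alpha> + real k) / (real k - c)"
      using reals_Archimedean2 by blast
    then have "real n * (real k - c) > real k * (\<alpha> + real k)"
      using ck by (simp add: pos_divide_less_eq)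
    then show False using main[of n] by linarith
  qed
  show ?thesis unfolding competitive_ratio_def k_def[symmetric]
    by (rule INF_greatest) (use cbound in auto)
qed

end
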